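(* Let $n\ge 2$ be an integer, let $G$ be a graph and let $V_1,\dots,V_t$ be pairwise disjoint subsets of $V(G)$ such that, for each $j\in[t-1]$, every vertex of the bipartite graph $G[V_j,V_{j+1}]$ has degree between $\delta$ and $\Delta$ in it. Let $T_1,\dots,T_n\subseteq V(G)$ be such that $|T_i\cap V_j|\le r$ for all $i\in[n]$, $j\in[t]$. Assume $1-\delta/\Delta\le t^{-1/2}\log n$. Then there exist matchings $M_j$ in $G[V_j,V_{j+1}]$ for $j\in[t-1]$ such that, letting $Y$ be the set consisting of all vertices $y\in V_1\cup V_t$ that belong to neither $M_1$ nor $M_{t-1}$, together with all vertices $y\in V_j$ with $2\le j\le t-1$ that do not belong to both $M_{j-1}$ and $M_j$, we have $|Y|\le 10\,|\bigcup_{i=1}^t V_i|\,t^{-1/2}\log n$ and $|Y\cap T_i|\le 10rt^{1/2}\log n$ for all $i\in[n]$.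
   Context: Logarithms are base 2. For disjoint $X,Y\subseteq V(G)$, $G[X,Y]$ is the bipartite subgraph with parts $X$ and $Y$ consisting of all edges of $G$ between $X$ and $Y$. *)

theory Defs
  imports Complex_Main
begin

definition simple_graph :: "'a set \<Rightarrow> ('a \<Rightarrow> 'a \<Rightarrow> bool) \<Rightarrow> bool" where
  "simple_graph VG E \<longleftrightarrow> finite VG \<and> (\<forall>u v. E u v \<longrightarrow> u \<in> VG \<and> v \<in> VG)
     \<and> (\<forall>u v. E u v \<longrightarrow> E v u) \<and> (\<forall>u. \<not> E u u)"

definition bip_degree :: "('a \<Rightarrow> 'a \<Rightarrow> bool) \<Rightarrow> 'a set \<Rightarrow> 'a set \<Rightarrow> 'a \<Rightarrow> nat" where
  "bip_degree E X Y v =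
     (if v \<in> X then card {u \<in> Y. E v u} else if v \<in> Y then card {u \<in> X. E v u} else 0)"

definition bip_matching :: "('a \<Rightarrow> 'a \<Rightarrow> bool) \<Rightarrow> 'a set \<Rightarrow> 'a set \<Rightarrow> ('a \<times> 'a) set \<Rightarrow> bool" where
  "bip_matching E X Y M \<longleftrightarrow>
     (\<forall>(x, y) \<in> M. x \<in> X \<and> y \<in> Y \<and> E x y) \<and>
     (\<forall>e \<in> M. \<forall>e' \<in> M. e \<noteq> e' \<longrightarrow>
        {fst e, snd e} \<inter> {fst e', snd e'} = {})"

definition match_verts :: "('a \<times> 'a) set \<Rightarrow> 'a set" where
  "match_verts M = fst ` M \<union> snd ` M"

end

theory Submission
  imports Defs "HOL-Library.FuncSet"
begin


definition proper :: "('a\<times>'a) set \<Rightarrow> ('a\<times>'a \<Rightarrow> nat) \<Rightarrow> bool" where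
 "proper F col \<longleftrightarrow> (\<forall>e\<in>F. \<forall>e'\<in>F. e \<noteq> e' \<and> (fst e = fst e' \<or> snd e = snd e') \<longrightarrow> col e \<noteq> col e')"

inductive_set kempe :: "('a\<times>'a) set \<Rightarrow> ('a\<times>'a\<Rightarrow>nat) \<Rightarrow> nat \<Rightarrow> nat \<Rightarrow> 'a \<Rightarrow> 'a set"
  for F col \<alpha> \<beta> w where
  k0: "w \<in> kempe F col \<alpha> \<beta> w"
| k1: "y \<in> kempe F col \<alpha> \<beta> w \<Longrightarrow> (x,y) \<in> F \<Longrightarrow> col (x,y) = \<alpha> \<Longrightarrow> x \<in> kempe F col \<alpha> \<beta> w"
| k2: "x \<in> kempe F col \<alpha> \<beta> w \<Longrightarrow> (x,y) \<in> F \<Longrightarrow> col (x,y) = \<beta> \<Longrightarrow> y \<in> kempe F col \<alpha> \<beta> w"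

lemma extend_col:
  assumes pr: "proper F col" and lt: "\<forall>e\<in>F. col e < k"
    and dj: "fst ` (insert (u,w) F) \<inter> snd ` (insert (u,w) F) = {}"
    and nF: "(u,w) \<notin> F" and ak: "\<alpha> < k" and bk: "\<beta> < k"
    and ua: "\<forall>y. (u,y) \<in> F \<longrightarrow> col (u,y) \<noteq> \<alpha>"
    and wb: "\<forall>x. (x,w) \<in> F \<longrightarrow> col (x,w) \<noteq> \<beta>"
  shows "\<exists>col'. proper (insert (u,w) F) col' \<and> (\<forall>e\<in>insert (u,w) F. col' e < k)"
proof -
  define R where "R = kempe F col \<alpha> \<beta> w"
  define sw where "sw = (\<lambda>c::nat. if c = \<alpha> then \<beta> else if c = \<beta> then \<alpha> else c)"
  define col' where "col' = (\<lambda>e. if e = (u,w) then \<alpha> else if fst e \<in> R then sw (col e) else col e)"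
  have u1: "y = y'" if "(x,y) \<in> F" "(x,y') \<in> F" "col (x,y) = col (x,y')" for x y y'
    using pr that unfolding proper_def by force
  have u2: "x = x'" if "(x,y) \<in> F" "(x',y) \<in> F" "col (x,y) = col (x',y)" for x x' y
    using pr that unfolding proper_def by force
  have d1: "(y,z) \<notin> F" if "(x,y) \<in> F" for x y z
    using dj that by force
  have dw: "(w,z) \<notin> F" for z using dj by force
  have du: "(z,u) \<notin> F" for z using dj by force
  have hasA: "\<exists>y. (x,y) \<in> F \<and> col (x,y) = \<alpha>" if "x \<in> R" "(x,z) \<in> F" for x z
    using that(1)[unfolded R_def]
  proof (cases rule: kempe.cases)
    case k0 then show ?thesis using dw that(2) by blast
  next
    case (k1 y) then show ?thesis by blast
  next
    case (k2 x') then show ?thesis using d1 that(2) by blast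
  qed
  have uR: "u \<notin> R"
  proof
    assume "u \<in> R"
    show False
    proof (cases "u = w")
      case True then show False using dj by force
    next
      case False
      from \<open>u \<in> R\<close>[unfolded R_def] show False
      proof (cases rule: kempe.cases)
        case k0 then show ?thesis using False by simp
      next
        case (k1 y) then show ?thesis using ua by blast
      next
        case (k2 x') then show ?thesis using du by blast
      qed
    qed
  qed
  have clos: "x \<in> R \<longleftrightarrow> y \<in> R" if "(x,y) \<in> F" "col (x,y) = \<alpha> \<or> col (x,y) = \<beta>" for x y
  proof
    assume xR: "x \<in> R"
    show "y \<in> R"
    proof (cases "col (x,y) = \<beta>")
      case True then show ?thesis using xR that(1) unfolding R_def by (blast intro: k2)
    next
      case False
      then have ca: "col (x,y) = \<alpha>" using that(2) by blast
      from xR[unfolded R_def] show ?thesis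
      proof (cases rule: kempe.cases)
        case k0 then show ?thesis using dw that(1) by blast
      next
        case (k1 y')
        then have "y' = y" using u1[of x y' y] ca that(1) by simp
        then show ?thesis using k1 R_def by simp
      next
        case (k2 x') then show ?thesis using d1 that(1) by blast
      qed
    qed
  next
    assume yR: "y \<in> R"
    show "x \<in> R"
    proof (cases "col (x,y) = \<alpha>")
      case True then show ?thesis using yR that(1) unfolding R_def by (blast intro: k1)
    next
      case False
      then have cb: "col (x,y) = \<beta>" using that(2) by blast
      from yR[unfolded R_def] show ?thesis
      proof (cases rule: kempe.cases)
        case k0 then show ?thesis using wb that(1) cb by blast
      next
        case (k1 y') then show ?thesis using d1 that(1) by blast
      next
        case (k2 x')
        then have "x' = x" using u2[of x' y x] cb that(1) by simp
        then show ?thesis using k2 R_def by simp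
      qed
    qed
  qed
  have swinj: "sw a = sw b \<longleftrightarrow> a = b" for a b unfolding sw_def by auto
  have prF: "col' e \<noteq> col' e'" if "e \<in> F" "e' \<in> F" "e \<noteq> e'" "fst e = fst e' \<or> snd e = snd e'" for e e'
  proof -
    have ne: "col e \<noteq> col e'" using pr that unfolding proper_def by blast
    have eu: "e \<noteq> (u,w)" "e' \<noteq> (u,w)" using that nF by auto
    show ?thesis
    proof (cases "(fst e \<in> R) = (fst e' \<in> R)")
      case True then show ?thesis using ne eu swinj unfolding col'_def by auto
    next
      case False
      then have sn: "snd e = snd e'" using that(4) by auto
      obtain a b where e: "e = (a,b)" by (cases e)
      obtain a' b' where e': "e' = (a',b')" by (cases e')
      have bb: "b' = b" using sn e e' by simp
      have ce: "col' e = col e \<and> col e \<noteq> \<alpha> \<and> col e \<noteq> \<beta> \<or> (col e = \<alpha> \<or> col e = \<beta>) \<and> (col' e = \<alpha> \<or> col' e = \<beta>)"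
        using eu unfolding col'_def sw_def by auto
      have ce': "col' e' = col e' \<and> col e' \<noteq> \<alpha> \<and> col e' \<noteq> \<beta> \<or> (col e' = \<alpha> \<or> col e' = \<beta>) \<and> (col' e' = \<alpha> \<or> col' e' = \<beta>)"
        using eu unfolding col'_def sw_def by auto
      have "\<not> ((col e = \<alpha> \<or> col e = \<beta>) \<and> (col e' = \<alpha> \<or> col e' = \<beta>))"
      proof
        assume h: "(col e = \<alpha> \<or> col e = \<beta>) \<and> (col e' = \<alpha> \<or> col e' = \<beta>)"
        have "a' \<in> R \<longleftrightarrow> b \<in> R" using clos[of a' b] that(2) e' bb h by auto
        moreover have "a \<in> R \<longleftrightarrow> b \<in> R" using clos[of a b] that(1) e h by auto
        ultimately show False using False e e' by auto
      qed
      then show ?thesis using ce ce' ne by auto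
    qed
  qed
  have pr': "proper (insert (u,w) F) col'"
    unfolding proper_def
  proof (intro ballI impI)
    fix e e' assume e: "e \<in> insert (u,w) F" and e': "e' \<in> insert (u,w) F"
      and h: "e \<noteq> e' \<and> (fst e = fst e' \<or> snd e = snd e')"
    have gen: "col' f \<noteq> \<alpha>" if "f \<in> F" "fst f = u \<or> snd f = w" for f
    proof -
      obtain a b where f: "f = (a,b)" by (cases f)
      have fu: "f \<noteq> (u,w)" using that nF by auto
      show ?thesis
      proof (cases "a = u")
        case True
        then have "col f \<noteq> \<alpha>" using ua that f by auto
        moreover have "fst f \<notin> R" using uR True f by simp
        ultimately show ?thesis using fu unfolding col'_def by simp
      next
        case False
        then have bw: "b = w" using that f by auto
        have "col f \<noteq> \<beta>" using wb that f bw by auto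
        moreover have "col f = \<alpha> \<Longrightarrow> a \<in> R" using clos[of a b] that f bw k0[of w F col \<alpha> \<beta>]
          unfolding R_def by auto
        ultimately show ?thesis using fu f unfolding col'_def sw_def by auto
      qed
    qed
    show "col' e \<noteq> col' e'"
    proof (cases "e = (u,w)")
      case True
      then have "e' \<in> F" using e' h by auto
      then show ?thesis using gen[of e'] h True unfolding col'_def by auto
    next
      case False
      then have eF: "e \<in> F" using e by auto
      show ?thesis
      proof (cases "e' = (u,w)")
        case True
        then show ?thesis using gen[of e] h eF unfolding col'_def by auto
      next
        case False
        then show ?thesis using prF[of e e'] eF e' h by auto
      qed
    qed
  qed
  have "\<forall>e\<in>insert (u,w) F. col' e < k"
    using lt ak bk unfolding col'_def sw_def by auto
  then show ?thesis using pr' by blast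
qed

lemma free_color:
  assumes fin: "finite D" and sub: "F \<subseteq> D" and eD: "(u,w) \<in> D" and nF: "(u,w) \<notin> F"
    and deg: "card {y. (u,y) \<in> D} \<le> k"
  shows "\<exists>\<alpha><k. \<forall>y. (u,y) \<in> F \<longrightarrow> col (u,y) \<noteq> \<alpha>"
proof -
  have fD: "finite {y. (u,y) \<in> D}"
    by (rule finite_subset[of _ "snd ` D"]) (force simp: fin)+
  have s1: "{y. (u,y) \<in> F} \<subseteq> {y. (u,y) \<in> D} - {w}" using sub nF by auto
  have "card {y. (u,y) \<in> F} \<le> card ({y. (u,y) \<in> D} - {w})"
    by (rule card_mono[OF _ s1]) (use fD in auto)
  also have "\<dots> = card {y. (u,y) \<in> D} - 1" using eD fD by (simp add: card_Diff_singleton)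
  finally have c0: "card {y. (u,y) \<in> F} \<le> card {y. (u,y) \<in> D} - 1" .
  have pos: "card {y. (u,y) \<in> D} > 0" using eD fD card_gt_0_iff by auto
  have c1: "card {y. (u,y) \<in> F} < k" using c0 pos deg by arith
  have fF: "finite {y. (u,y) \<in> F}" using finite_subset[OF s1] fD by auto
  have c2: "card ((\<lambda>y. col (u,y)) ` {y. (u,y) \<in> F}) < k"
    using le_less_trans[OF card_image_le[OF fF] c1] .
  have "\<not> {0..<k} \<subseteq> (\<lambda>y. col (u,y)) ` {y. (u,y) \<in> F}"
  proof
    assume "{0..<k} \<subseteq> (\<lambda>y. col (u,y)) ` {y. (u,y) \<in> F}"
    then have "card {0..<k} \<le> card ((\<lambda>y. col (u,y)) ` {y. (u,y) \<in> F})"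
      using card_mono fF by blast
    then show False using c2 by simp
  qed
  then obtain \<alpha> where "\<alpha> \<in> {0..<k}" "\<alpha> \<notin> (\<lambda>y. col (u,y)) ` {y. (u,y) \<in> F}"
    by blast
  then show ?thesis by auto
qed

lemma sw_mem: "((a,b) \<in> (\<lambda>(x,y). (y,x)) ` S) = ((b,a) \<in> S)" by force

lemma free_color2:
  assumes fin: "finite D" and sub: "F \<subseteq> D" and eD: "(u,w) \<in> D" and nF: "(u,w) \<notin> F"
    and deg: "card {x. (x,w) \<in> D} \<le> k"
  shows "\<exists>\<beta><k. \<forall>x. (x,w) \<in> F \<longrightarrow> col (x,w) \<noteq> \<beta>"
proof -
  have f: "finite ((\<lambda>(a,b). (b,a)) ` D)" using fin by simp
  have "{x. (x,w) \<in> D} = {x. (w,x) \<in> (\<lambda>(a,b). (b,a)) ` D}" by (auto simp: image_iff) force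
  then have d: "card {x. (w,x) \<in> (\<lambda>(a,b). (b,a)) ` D} \<le> k" using deg by simp
  obtain \<beta> where "\<beta> < k" "\<forall>x. (w,x) \<in> (\<lambda>(a,b). (b,a)) ` F \<longrightarrow> (\<lambda>(a,b). col (b,a)) (w,x) \<noteq> \<beta>"
    using free_color[OF f _ _ _ d, of "(\<lambda>(a,b). (b,a)) ` F" u "\<lambda>(a,b). col (b,a)"] sub eD nF
    unfolding sw_mem by auto
  then show ?thesis unfolding sw_mem by auto
qed

lemma bip_coloring:
  assumes fin: "finite D" and dj: "fst ` D \<inter> snd ` D = {}"
    and d1: "\<And>x. card {y. (x,y) \<in> D} \<le> k" and d2: "\<And>y. card {x. (x,y) \<in> D} \<le> k"
  shows "\<exists>col. proper D col \<and> (\<forall>e\<in>D. col e < k)"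
proof -
  have "\<exists>col. proper F col \<and> (\<forall>e\<in>F. col e < k)" if "F \<subseteq> D" for F
    using finite_subset[OF that fin] that
  proof (induction F rule: finite_induct)
    case empty then show ?case by (auto simp: proper_def)
  next
    case (insert e F)
    obtain col where c: "proper F col" "\<forall>e\<in>F. col e < k" using insert by auto
    obtain u w where e: "e = (u,w)" by (cases e)
    obtain \<alpha> where a: "\<alpha> < k" "\<forall>y. (u,y) \<in> F \<longrightarrow> col (u,y) \<noteq> \<alpha>"
      using free_color[OF fin _ _ _ d1, of F u w col] insert e by auto
    obtain \<beta> where b: "\<beta> < k" "\<forall>x. (x,w) \<in> F \<longrightarrow> col (x,w) \<noteq> \<beta>"
      using free_color2[OF fin _ _ _ d2, of F u w col] insert e by auto
    have djF: "fst ` insert (u,w) F \<inter> snd ` insert (u,w) F = {}"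
      using dj insert e by blast
    show ?case using extend_col[OF c djF _ a(1) b(1) a(2) b(2)] insert e by auto
  qed
  then show ?thesis by blast
qed



lemma sum_PiE_single:
  fixes g :: "'b \<Rightarrow> real"
  assumes J: "finite J" "j \<in> J" and A: "finite A"
  shows "(\<Sum>c\<in>PiE J (\<lambda>_. A). g (c j)) = (\<Sum>a\<in>A. g a) * real (card A) ^ (card J - 1)"
proof -
  have "(\<Sum>c\<in>PiE J (\<lambda>_. A). g (c j)) = (\<Sum>c\<in>PiE J (\<lambda>_. A). \<Prod>j'\<in>J. (if j' = j then g (c j') else 1))"
    using J by (intro sum.cong) (auto simp: prod.delta)
  also have "\<dots> = (\<Prod>j'\<in>J. \<Sum>a\<in>A. (if j' = j then g a else 1))"
    using prod_sum_PiE[of J "\<lambda>_. A" "\<lambda>j' a. if j' = j then g a else 1"] J A by simp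
  also have "\<dots> = (\<Sum>a\<in>A. g a) * (\<Prod>j'\<in>J - {j}. \<Sum>a\<in>A. (if j' = j then g a else 1))"
    using J by (simp add: prod.remove)
  also have "(\<Prod>j'\<in>J - {j}. \<Sum>a\<in>A. (if j' = j then g a else 1)) = (\<Prod>j'\<in>J - {j}. real (card A))"
    by (intro prod.cong) auto
  also have "\<dots> = real (card A) ^ (card J - 1)" using J by simp
  finally show ?thesis .
qed

lemma markov_count:
  fixes f :: "'b \<Rightarrow> real"
  assumes "finite S" "\<And>c. c \<in> S \<Longrightarrow> 0 \<le> f c"
  shows "real (card {c\<in>S. \<theta> < f c}) * \<theta> \<le> (\<Sum>c\<in>S. f c)"
proof -
  have "real (card {c\<in>S. \<theta> < f c}) * \<theta> = (\<Sum>c\<in>{c\<in>S. \<theta> < f c}. \<theta>)" by simp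
  also have "\<dots> \<le> (\<Sum>c\<in>{c\<in>S. \<theta> < f c}. f c)" by (intro sum_mono) auto
  also have "\<dots> \<le> (\<Sum>c\<in>S. f c)" using assms by (intro sum_mono2) auto
  finally show ?thesis .
qed

lemma card_as_sum:
  assumes "finite S"
  shows "card {v\<in>S. Q v} = (\<Sum>v\<in>S. if Q v then 1 else 0::nat)"
proof -
  have "(\<Sum>v\<in>S. if Q v then 1 else 0::nat) = card (S \<inter> {v. Q v})"
    using assms by (simp add: sum.If_cases)
  moreover have "S \<inter> {v. Q v} = {v\<in>S. Q v}" by blast
  ultimately show ?thesis by simp
qed

lemma double_count:
  assumes "finite A" "finite B"
  shows "(\<Sum>a\<in>A. card {v\<in>B. P v a}) = (\<Sum>v\<in>B. card {a\<in>A. P v a})"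
proof -
  have "(\<Sum>a\<in>A. card {v\<in>B. P v a}) = (\<Sum>a\<in>A. \<Sum>v\<in>B. if P v a then 1 else 0)"
    using assms card_as_sum[of B] by simp
  also have "\<dots> = (\<Sum>v\<in>B. \<Sum>a\<in>A. if P v a then 1 else 0)" by (rule sum.swap)
  also have "\<dots> = (\<Sum>v\<in>B. card {a\<in>A. P v a})"
    using assms card_as_sum[of A] by simp
  finally show ?thesis .
qed

lemma exp_le_1_2: "0 \<le> (s::real) \<Longrightarrow> s \<le> 1 \<Longrightarrow> exp s \<le> 1 + 2 * s"
proof -
  assume s: "0 \<le> s" "s \<le> 1"
  have "s^2 \<le> s" using s by (simp add: power2_eq_square mult_left_le)
  then show ?thesis using exp_bound[OF s] by simp
qed

lemma uncov_count:
  assumes fin: "finite D" and pr: "proper D col" and lt: "\<forall>e\<in>D. col e < K"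
    and dj: "fst ` D \<inter> snd ` D = {}"
  shows "card {a\<in>{0..<K}. v \<notin> match_verts {e\<in>D. col e = a}}
     = K - card {y. (v,y) \<in> D} - card {y. (y,v) \<in> D}"
proof -
  define A1 where "A1 = {y. (v,y) \<in> D}"
  define A2 where "A2 = {y. (y,v) \<in> D}"
  have f1: "finite A1" unfolding A1_def
    by (rule finite_subset[of _ "snd ` D"]) (force simp: fin)+
  have f2: "finite A2" unfolding A2_def
    by (rule finite_subset[of _ "fst ` D"]) (force simp: fin)+
  have cov: "{a\<in>{0..<K}. v \<in> match_verts {e\<in>D. col e = a}}
      = (\<lambda>y. col (v,y)) ` A1 \<union> (\<lambda>y. col (y,v)) ` A2"
    unfolding match_verts_def A1_def A2_def using lt by force
  have i1: "inj_on (\<lambda>y. col (v,y)) A1" unfolding inj_on_def A1_def using pr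
    unfolding proper_def by force
  have i2: "inj_on (\<lambda>y. col (y,v)) A2" unfolding inj_on_def A2_def using pr
    unfolding proper_def by force
  have "A1 = {} \<or> A2 = {}" unfolding A1_def A2_def using dj by force
  then have cc: "card ((\<lambda>y. col (v,y)) ` A1 \<union> (\<lambda>y. col (y,v)) ` A2) = card A1 + card A2"
    using card_image[OF i1] card_image[OF i2] by auto
  define C where "C = {a\<in>{0..<K}. v \<in> match_verts {e\<in>D. col e = a}}"
  have Csub: "C \<subseteq> {0..<K}" unfolding C_def by blast
  have e1: "{a\<in>{0..<K}. v \<notin> match_verts {e\<in>D. col e = a}} = {0..<K} - C"
    unfolding C_def by auto
  have e2: "card ({0..<K} - C) = K - card C"
    using card_Diff_subset[OF finite_subset[OF Csub] Csub] by simp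
  have e3: "card C = card A1 + card A2" using cov cc unfolding C_def by simp
  show ?thesis unfolding A1_def[symmetric] A2_def[symmetric] e1 e2 e3 by simp
qed


theorem mainTheorem9:
  fixes VG :: "'a set" and E :: "'a \<Rightarrow> 'a \<Rightarrow> bool"
    and n t r :: nat and \<delta> \<Delta> :: real
    and V :: "nat \<Rightarrow> 'a set" and T :: "nat \<Rightarrow> 'a set"
  assumes graph: "simple_graph VG E"
    and n2: "n \<ge> 2" and t2: "t \<ge> 2"
    and Vsub: "\<And>j. j \<in> {1..t} \<Longrightarrow> V j \<subseteq> VG"
    and Vdisj: "\<And>i j. i \<in> {1..t} \<Longrightarrow> j \<in> {1..t} \<Longrightarrow> i \<noteq> j \<Longrightarrow> V i \<inter> V j = {}"
    and deg: "\<And>j v. j \<in> {1..t-1} \<Longrightarrow> v \<in> V j \<union> V (j+1) \<Longrightarrow>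
                 \<delta> \<le> real (bip_degree E (V j) (V (j+1)) v) \<and>
                 real (bip_degree E (V j) (V (j+1)) v) \<le> \<Delta>"
    and Tsub: "\<And>i. i \<in> {1..n} \<Longrightarrow> T i \<subseteq> VG"
    and Tr: "\<And>i j. i \<in> {1..n} \<Longrightarrow> j \<in> {1..t} \<Longrightarrow> card (T i \<inter> V j) \<le> r"
    and ratio: "1 - \<delta> / \<Delta> \<le> real t powr (-1/2) * log 2 (real n)"
  shows "\<exists>M :: nat \<Rightarrow> ('a \<times> 'a) set.
           (\<forall>j \<in> {1..t-1}. bip_matching E (V j) (V (j+1)) (M j)) \<and>
           (let Y = {y \<in> V 1 \<union> V t. y \<notin> match_verts (M 1) \<and> y \<notin> match_verts (M (t-1))}
                  \<union> {y. \<exists>j \<in> {2..t-1}. y \<in> V j \<and>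
                        \<not> (y \<in> match_verts (M (j-1)) \<and> y \<in> match_verts (M j))}
            in real (card Y) \<le> 10 * real (card (\<Union>i\<in>{1..t}. V i)) * real t powr (-1/2) * log 2 (real n)
               \<and> (\<forall>i \<in> {1..n}. real (card (Y \<inter> T i)) \<le> 10 * real r * sqrt (real t) * log 2 (real n)))"
proof -
  define x where "x = real t powr (-1/2) * log 2 (real n)"
  have tpos: "real t > 0" using t2 by simp
  have sqt: "sqrt (real t) \<ge> 1" using t2 by simp
  have lg: "log 2 (real n) \<ge> 1" using n2 by simp
  have tp: "real t powr (-1/2) = 1 / sqrt (real t)"
    using tpos by (simp add: powr_minus_divide powr_half_sqrt)
  have xpos: "x > 0" unfolding x_def tp using lg tpos by simp
  have xt: "x * real t = sqrt (real t) * log 2 (real n)"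
  proof -
    have s: "sqrt (real t) > 0" using tpos by simp
    have "real t = sqrt (real t) * sqrt (real t)" by simp
    then have "x * real t = (1 / sqrt (real t) * log 2 (real n)) * (sqrt (real t) * sqrt (real t))"
      unfolding x_def tp by simp
    also have "\<dots> = sqrt (real t) * log 2 (real n)" using s by (simp add: field_simps)
    finally show ?thesis .
  qed
  have xtl: "x * real t \<ge> log 2 (real n)"
    unfolding xt using sqt lg by (simp add: mult_le_cancel_right1)
  define K where "K = max 1 (nat \<lfloor>\<Delta>\<rfloor>)"
  have K1: "K \<ge> 1" unfolding K_def by simp
  define J where "J = {1..t-1}"
  have Jsub: "\<And>j. j \<in> J \<Longrightarrow> j \<in> {1..t} \<and> j+1 \<in> {1..t}" unfolding J_def by auto
  have finJ: "finite J" unfolding J_def by simp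
  have cardJ: "card J = t - 1" unfolding J_def by simp
  have finVG: "finite VG" using graph unfolding simple_graph_def by simp
  have finV: "\<And>j. j \<in> {1..t} \<Longrightarrow> finite (V j)" using Vsub finVG finite_subset by metis
  have Esym: "\<And>a b. E a b \<Longrightarrow> E b a" using graph unfolding simple_graph_def by blast
  define D where "D = (\<lambda>j. {(a,b). a \<in> V j \<and> b \<in> V (j+1) \<and> E a b})"
  have finD: "\<And>j. j \<in> J \<Longrightarrow> finite (D j)"
  proof -
    fix j assume j: "j \<in> J"
    have "D j \<subseteq> V j \<times> V (j+1)" unfolding D_def by auto
    then show "finite (D j)" using finV Jsub[OF j] finite_subset by blast
  qed
  have djV: "\<And>j. j \<in> J \<Longrightarrow> V j \<inter> V (j+1) = {}" using Vdisj Jsub by auto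
  have djD: "\<And>j. j \<in> J \<Longrightarrow> fst ` D j \<inter> snd ` D j = {}"
  proof -
    fix j assume j: "j \<in> J"
    have "fst ` D j \<subseteq> V j" "snd ` D j \<subseteq> V (j+1)" unfolding D_def by auto
    then show "fst ` D j \<inter> snd ` D j = {}" using djV[OF j] by blast
  qed
  have degK: "\<And>j v. j \<in> J \<Longrightarrow> v \<in> V j \<union> V (j+1) \<Longrightarrow> bip_degree E (V j) (V (j+1)) v \<le> K"
  proof -
    fix j v assume j: "j \<in> J" and v: "v \<in> V j \<union> V (j+1)"
    have "j \<in> {1..t-1}" using j unfolding J_def .
    then have "real (bip_degree E (V j) (V (j+1)) v) \<le> \<Delta>" using deg v by blast
    then have "int (bip_degree E (V j) (V (j+1)) v) \<le> \<lfloor>\<Delta>\<rfloor>" by (simp add: le_floor_iff)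
    then show "bip_degree E (V j) (V (j+1)) v \<le> K" unfolding K_def by linarith
  qed
  have deg1: "\<And>j v. j \<in> J \<Longrightarrow> v \<in> V j \<Longrightarrow> card {y. (v,y) \<in> D j} = bip_degree E (V j) (V (j+1)) v"
    unfolding D_def bip_degree_def by simp
  have deg2: "\<And>j v. j \<in> J \<Longrightarrow> v \<in> V (j+1) \<Longrightarrow> card {y. (y,v) \<in> D j} = bip_degree E (V j) (V (j+1)) v"
  proof -
    fix j v assume j: "j \<in> J" and v: "v \<in> V (j+1)"
    have vn: "v \<notin> V j" using djV[OF j] v by blast
    have "{y. (y,v) \<in> D j} = {u \<in> V j. E v u}" unfolding D_def using v Esym by auto
    then show "card {y. (y,v) \<in> D j} = bip_degree E (V j) (V (j+1)) v"
      unfolding bip_degree_def using vn v by simp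
  qed
  have z1: "\<And>j v. j \<in> J \<Longrightarrow> v \<notin> V j \<Longrightarrow> {y. (v,y) \<in> D j} = {}" unfolding D_def by auto
  have z2: "\<And>j v. j \<in> J \<Longrightarrow> v \<notin> V (j+1) \<Longrightarrow> {y. (y,v) \<in> D j} = {}" unfolding D_def by auto
  have out1: "\<And>j a. j \<in> J \<Longrightarrow> card {y. (a,y) \<in> D j} \<le> K"
    by (metis (no_types, lifting) UnI1 card.empty deg1 degK le0 z1)
  have out2: "\<And>j b. j \<in> J \<Longrightarrow> card {a. (a,b) \<in> D j} \<le> K"
    by (metis (no_types, lifting) UnI2 card.empty deg2 degK le0 z2)
  have "\<forall>j\<in>J. \<exists>cl. proper (D j) cl \<and> (\<forall>e\<in>D j. cl e < K)"
  proof
    fix j assume j: "j \<in> J"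
    show "\<exists>cl. proper (D j) cl \<and> (\<forall>e\<in>D j. cl e < K)"
      by (rule bip_coloring[OF finD[OF j] djD[OF j] out1[OF j] out2[OF j]])
  qed
  then obtain col where col: "\<And>j. j \<in> J \<Longrightarrow> proper (D j) (col j) \<and> (\<forall>e\<in>D j. col j e < K)"
    by metis
  define Mat where "Mat = (\<lambda>j a. {e \<in> D j. col j e = a})"
  have matching: "\<And>j a. j \<in> J \<Longrightarrow> bip_matching E (V j) (V (j+1)) (Mat j a)"
  proof -
    fix j a assume j: "j \<in> J"
    have pr: "proper (D j) (col j)" using col[OF j] by blast
    show "bip_matching E (V j) (V (j+1)) (Mat j a)"
      unfolding bip_matching_def
    proof (intro conjI ballI impI)
      fix e assume "e \<in> Mat j a"
      then show "case e of (x, y) \<Rightarrow> x \<in> V j \<and> y \<in> V (j + 1) \<and> E x y"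
        unfolding Mat_def D_def by auto
    next
      fix e e' assume e: "e \<in> Mat j a" and e': "e' \<in> Mat j a" and ne: "e \<noteq> e'"
      have eD: "e \<in> D j" "e' \<in> D j" "col j e = col j e'" using e e' unfolding Mat_def by auto
      then have "fst e \<noteq> fst e'" "snd e \<noteq> snd e'" using pr ne unfolding proper_def by blast+
      moreover have "fst e \<noteq> snd e'" "snd e \<noteq> fst e'" using djD[OF j] eD by (metis disjoint_iff imageI)+
      ultimately show "{fst e, snd e} \<inter> {fst e', snd e'} = {}" by auto
    qed
  qed
  have uncov: "\<And>j v. j \<in> J \<Longrightarrow> v \<in> V j \<union> V (j+1) \<Longrightarrow>
      real (card {a\<in>{0..<K}. v \<notin> match_verts (Mat j a)}) \<le> x * real K"
  proof -
    fix j v assume j: "j \<in> J" and v: "v \<in> V j \<union> V (j+1)"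
    define d where "d = bip_degree E (V j) (V (j+1)) v"
    have cnt: "card {a\<in>{0..<K}. v \<notin> match_verts (Mat j a)} = K - card {y. (v,y) \<in> D j} - card {y. (y,v) \<in> D j}"
      unfolding Mat_def using uncov_count[OF finD[OF j]] col[OF j] djD[OF j] by blast
    have "card {y. (v,y) \<in> D j} + card {y. (y,v) \<in> D j} = d"
    proof (cases "v \<in> V j")
      case True
      then have "v \<notin> V (j+1)" using djV[OF j] by blast
      then show ?thesis using deg1[OF j True] z2[OF j] unfolding d_def by simp
    next
      case False
      then have "v \<in> V (j+1)" using v by blast
      then show ?thesis using deg2[OF j] z1[OF j False] unfolding d_def by simp
    qed
    then have cnt2: "card {a\<in>{0..<K}. v \<notin> match_verts (Mat j a)} = K - d" using cnt by simp
    have dK: "d \<le> K" using degK[OF j v] unfolding d_def .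
    have jj: "j \<in> {1..t-1}" using j unfolding J_def .
    have dd: "\<delta> \<le> real d" "real d \<le> \<Delta>" using deg[OF jj v] unfolding d_def by auto
    have "real K - real d \<le> x * real K"
    proof (cases "x \<ge> 1")
      case True
      then show ?thesis using mult_right_mono[OF True, of "real K"] by simp
    next
      case False
      have r: "1 - \<delta> / \<Delta> \<le> x" using ratio unfolding x_def .
      have D0: "\<Delta> \<ge> 0" using dd by linarith
      have Dp: "\<Delta> > 0"
      proof (rule ccontr)
        assume "\<not> \<Delta> > 0"
        then have "\<Delta> = 0" using D0 by simp
        then show False using r False by simp
      qed
      have "1 - x \<le> \<delta> / \<Delta>" using r by simp
      then have dl: "(1 - x) * \<Delta> \<le> \<delta>" using Dp by (simp add: pos_le_divide_eq)
      have "(1 - x) * \<Delta> > 0" using False Dp by simp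
      then have "real d > 0" using dl dd by linarith
      then have d1: "d \<ge> 1" by simp
      have "real d \<le> \<Delta>" using dd by simp
      then have "int d \<le> \<lfloor>\<Delta>\<rfloor>" by (simp add: le_floor_iff)
      then have "nat \<lfloor>\<Delta>\<rfloor> \<ge> 1" using d1 by linarith
      then have KK: "K = nat \<lfloor>\<Delta>\<rfloor>" unfolding K_def by simp
      have "real (nat \<lfloor>\<Delta>\<rfloor>) = of_int \<lfloor>\<Delta>\<rfloor>" using \<open>nat \<lfloor>\<Delta>\<rfloor> \<ge> 1\<close> by simp
      then have KD: "real K \<le> \<Delta>" unfolding KK using of_int_floor_le[of \<Delta>] by simp
      have "(1 - x) * real K \<le> (1 - x) * \<Delta>" using KD False by (simp add: mult_left_mono)
      then show ?thesis using dl dd by (simp add: algebra_simps)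
    qed
    then show "real (card {a\<in>{0..<K}. v \<notin> match_verts (Mat j a)}) \<le> x * real K"
      using cnt2 dK by (simp add: of_nat_diff)
  qed
  define h where "h = (\<lambda>T j a. real (card ((V j - match_verts (Mat j a)) \<inter> T))
                          + real (card ((V (j+1) - match_verts (Mat j a)) \<inter> T)))"
  have h_nonneg: "\<And>T j a. h T j a \<ge> 0" unfolding h_def by simp
  have h_le: "\<And>T j a. j \<in> J \<Longrightarrow> h T j a \<le> real (card (V j \<inter> T)) + real (card (V (j+1) \<inter> T))"
  proof -
    fix T j a assume j: "j \<in> J"
    have f1: "finite (V j \<inter> T)" "finite (V (j+1) \<inter> T)" using finV Jsub[OF j] by auto
    have "card ((V j - match_verts (Mat j a)) \<inter> T) \<le> card (V j \<inter> T)"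
      by (rule card_mono[OF f1(1)]) blast
    moreover have "card ((V (j+1) - match_verts (Mat j a)) \<inter> T) \<le> card (V (j+1) \<inter> T)"
      by (rule card_mono[OF f1(2)]) blast
    ultimately show "h T j a \<le> real (card (V j \<inter> T)) + real (card (V (j+1) \<inter> T))"
      unfolding h_def by linarith
  qed
  have avg1: "\<And>T j W. j \<in> J \<Longrightarrow> W = j \<or> W = j+1 \<Longrightarrow>
     (\<Sum>a\<in>{0..<K}. real (card ((V W - match_verts (Mat j a)) \<inter> T))) \<le> x * real K * real (card (V W \<inter> T))"
  proof -
    fix T j W assume j: "j \<in> J" and W: "W = j \<or> W = j+1"
    have fW: "finite (V W \<inter> T)" using finV Jsub[OF j] W by auto
    have se: "\<And>a. (V W - match_verts (Mat j a)) \<inter> T = {v \<in> V W \<inter> T. v \<notin> match_verts (Mat j a)}"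
      by blast
    have eqn: "(\<Sum>a\<in>{0..<K}. card ((V W - match_verts (Mat j a)) \<inter> T))
        = (\<Sum>v\<in>V W \<inter> T. card {a\<in>{0..<K}. v \<notin> match_verts (Mat j a)})"
      unfolding se by (rule double_count[OF _ fW]) simp
    have eq: "(\<Sum>a\<in>{0..<K}. real (card ((V W - match_verts (Mat j a)) \<inter> T)))
        = (\<Sum>v\<in>V W \<inter> T. real (card {a\<in>{0..<K}. v \<notin> match_verts (Mat j a)}))"
      unfolding of_nat_sum[symmetric] eqn ..
    have vv: "\<And>v. v \<in> V W \<inter> T \<Longrightarrow> v \<in> V j \<union> V (j+1)" using W by blast
    have "(\<Sum>v\<in>V W \<inter> T. real (card {a\<in>{0..<K}. v \<notin> match_verts (Mat j a)}))
        \<le> (\<Sum>v\<in>V W \<inter> T. x * real K)"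
      by (rule sum_mono) (rule uncov[OF j vv])
    also have "\<dots> = x * real K * real (card (V W \<inter> T))" by simp
    finally show "(\<Sum>a\<in>{0..<K}. real (card ((V W - match_verts (Mat j a)) \<inter> T))) \<le> x * real K * real (card (V W \<inter> T))"
      unfolding eq .
  qed
  have h_avg: "\<And>T j. j \<in> J \<Longrightarrow> (\<Sum>a\<in>{0..<K}. h T j a) \<le> x * real K * (real (card (V j \<inter> T)) + real (card (V (j+1) \<inter> T)))"
  proof -
    fix T j assume j: "j \<in> J"
    have "(\<Sum>a\<in>{0..<K}. h T j a) = (\<Sum>a\<in>{0..<K}. real (card ((V j - match_verts (Mat j a)) \<inter> T)))
        + (\<Sum>a\<in>{0..<K}. real (card ((V (j+1) - match_verts (Mat j a)) \<inter> T)))"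
      unfolding h_def by (simp add: sum.distrib)
    then show "(\<Sum>a\<in>{0..<K}. h T j a) \<le> x * real K * (real (card (V j \<inter> T)) + real (card (V (j+1) \<inter> T)))"
      using avg1[OF j, of j T] avg1[OF j, of "j+1" T] by (simp add: algebra_simps)
  qed
  define Yf where "Yf = (\<lambda>M :: nat \<Rightarrow> ('a\<times>'a) set.
       {y \<in> V 1 \<union> V t. y \<notin> match_verts (M 1) \<and> y \<notin> match_verts (M (t-1))}
                  \<union> {y. \<exists>j \<in> {2..t-1}. y \<in> V j \<and>
                        \<not> (y \<in> match_verts (M (j-1)) \<and> y \<in> match_verts (M j))})"
  have Ysub: "\<And>c. Yf (\<lambda>j. Mat j (c j)) \<subseteq> (\<Union>j\<in>J. (V j - match_verts (Mat j (c j))) \<union> (V (j+1) - match_verts (Mat j (c j))))"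
  proof
    fix c y assume y: "y \<in> Yf (\<lambda>j. Mat j (c j))"
    have J1: "1 \<in> J" "t - 1 \<in> J" using t2 unfolding J_def by auto
    have tt: "t - 1 + 1 = t" using t2 by simp
    show "y \<in> (\<Union>j\<in>J. (V j - match_verts (Mat j (c j))) \<union> (V (j+1) - match_verts (Mat j (c j))))"
    proof (cases "y \<in> V 1 \<union> V t \<and> y \<notin> match_verts (Mat 1 (c 1)) \<and> y \<notin> match_verts (Mat (t-1) (c (t-1)))")
      case True
      then show ?thesis
      proof (cases "y \<in> V 1")
        case True then show ?thesis using J1 \<open>y \<in> V 1 \<union> V t \<and> _\<close> by blast
      next
        case False
        then have "y \<in> V (t - 1 + 1)" using \<open>y \<in> V 1 \<union> V t \<and> _\<close> tt by auto
        then show ?thesis using J1 \<open>y \<in> V 1 \<union> V t \<and> _\<close> by blast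
      qed
    next
      case False
      then obtain j where j: "j \<in> {2..t-1}" "y \<in> V j"
        "\<not> (y \<in> match_verts (Mat (j-1) (c (j-1))) \<and> y \<in> match_verts (Mat j (c j)))"
        using y unfolding Yf_def by blast
      have jJ: "j \<in> J" "j - 1 \<in> J" using j(1) unfolding J_def by auto
      have jj: "j - 1 + 1 = j" using j(1) by auto
      show ?thesis
      proof (cases "y \<in> match_verts (Mat (j-1) (c (j-1)))")
        case True
        then show ?thesis using j jJ by blast
      next
        case False
        then have "y \<in> V (j - 1 + 1) - match_verts (Mat (j-1) (c (j-1)))" using jj j by simp
        then show ?thesis using jJ by blast
      qed
    qed
  qed
  have Ycard: "\<And>c T. real (card (Yf (\<lambda>j. Mat j (c j)) \<inter> T)) \<le> (\<Sum>j\<in>J. h T j (c j))"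
  proof -
    fix c T
    define A where "A = (\<lambda>j. (V j - match_verts (Mat j (c j))) \<inter> T)"
    define B where "B = (\<lambda>j. (V (j+1) - match_verts (Mat j (c j))) \<inter> T)"
    have fA: "\<And>j. j \<in> J \<Longrightarrow> finite (A j) \<and> finite (B j)"
      unfolding A_def B_def using finV Jsub by auto
    have "Yf (\<lambda>j. Mat j (c j)) \<inter> T \<subseteq> (\<Union>j\<in>J. A j \<union> B j)"
      using Ysub[of c] unfolding A_def B_def by blast
    then have "card (Yf (\<lambda>j. Mat j (c j)) \<inter> T) \<le> card (\<Union>j\<in>J. A j \<union> B j)"
      by (rule card_mono[rotated]) (use finJ fA in auto)
    also have "\<dots> \<le> (\<Sum>j\<in>J. card (A j \<union> B j))" by (rule card_UN_le[OF finJ])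
    also have "\<dots> \<le> (\<Sum>j\<in>J. card (A j) + card (B j))" by (intro sum_mono card_Un_le)
    finally have "real (card (Yf (\<lambda>j. Mat j (c j)) \<inter> T)) \<le> real (\<Sum>j\<in>J. card (A j) + card (B j))"
      by linarith
    also have "\<dots> = (\<Sum>j\<in>J. h T j (c j))" unfolding h_def A_def B_def by simp
    finally show "real (card (Yf (\<lambda>j. Mat j (c j)) \<inter> T)) \<le> (\<Sum>j\<in>J. h T j (c j))" .
  qed
  define S where "S = PiE J (\<lambda>_. {0..<K})"
  have finS: "finite S" unfolding S_def using finJ by (simp add: finite_PiE)
  have cardS: "card S = K ^ card J" unfolding S_def using finJ by (simp add: card_PiE)
  have J1: "card J \<ge> 1" using cardJ t2 by simp
  have KJ: "real K * real K ^ (card J - 1) = real K ^ card J"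
    using J1 by (metis Suc_diff_le diff_Suc_1 power_Suc)
  define U where "U = card (\<Union>i\<in>{1..t}. V i)"
  have Usum: "real U = (\<Sum>i\<in>{1..t}. real (card (V i)))"
  proof -
    have "card (\<Union>i\<in>{1..t}. V i) = (\<Sum>i\<in>{1..t}. card (V i))"
      by (rule card_UN_disjoint) (use finV Vdisj in auto)
    then show ?thesis unfolding U_def by simp
  qed
  have sumV: "(\<Sum>j\<in>J. real (card (V j)) + real (card (V (j+1)))) \<le> 2 * real U"
  proof -
    have a: "(\<Sum>j\<in>J. real (card (V j))) \<le> (\<Sum>i\<in>{1..t}. real (card (V i)))"
      by (rule sum_mono2) (auto simp: J_def)
    have "(\<Sum>j\<in>J. real (card (V (j+1)))) = (\<Sum>j\<in>{1..t-1}. real (card (V (Suc j))))"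
      unfolding J_def by simp
    also have "\<dots> = (\<Sum>i\<in>{Suc 1..Suc (t-1)}. real (card (V i)))"
      by (rule sum.shift_bounds_cl_Suc_ivl[symmetric])
    also have "\<dots> \<le> (\<Sum>i\<in>{1..t}. real (card (V i)))"
      by (rule sum_mono2) auto
    finally show ?thesis using a Usum by (simp add: sum.distrib)
  qed
  define B0 where "B0 = {c\<in>S. 10 * x * real U < (\<Sum>j\<in>J. h UNIV j (c j))}"
  have B0: "real (card B0) \<le> real K ^ card J / 5"
  proof (cases "U = 0")
    case True
    have "B0 = {}"
    proof -
      have "(\<Sum>j\<in>J. h UNIV j (c j)) \<le> 0" for c
      proof -
        have "(\<Sum>j\<in>J. h UNIV j (c j)) \<le> (\<Sum>j\<in>J. real (card (V j)) + real (card (V (j+1))))"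
          by (rule sum_mono) (use h_le[of _ UNIV] in simp)
        then show ?thesis using sumV True by simp
      qed
      then show ?thesis unfolding B0_def using True by (auto simp: not_less)
    qed
    then show ?thesis by simp
  next
    case False
    have th: "10 * x * real U > 0" using False xpos by simp
    have "real (card B0) * (10 * x * real U) \<le> (\<Sum>c\<in>S. \<Sum>j\<in>J. h UNIV j (c j))"
      unfolding B0_def by (rule markov_count[OF finS]) (simp add: sum_nonneg h_nonneg)
    also have "\<dots> = (\<Sum>j\<in>J. \<Sum>c\<in>S. h UNIV j (c j))" by (rule sum.swap)
    also have "\<dots> = (\<Sum>j\<in>J. (\<Sum>a\<in>{0..<K}. h UNIV j a) * real K ^ (card J - 1))"
      unfolding S_def by (intro sum.cong refl) (simp add: sum_PiE_single[OF finJ])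
    also have "\<dots> \<le> (\<Sum>j\<in>J. (x * real K * (real (card (V j)) + real (card (V (j+1))))) * real K ^ (card J - 1))"
      by (intro sum_mono mult_right_mono) (use h_avg[of _ UNIV] in auto)
    also have "\<dots> = x * (real K * real K ^ (card J - 1)) * (\<Sum>j\<in>J. real (card (V j)) + real (card (V (j+1))))"
      by (simp add: sum_distrib_left sum_distrib_right algebra_simps)
    also have "\<dots> \<le> x * real K ^ card J * (2 * real U)"
      unfolding KJ using sumV xpos by (intro mult_left_mono) auto
    finally have "real (card B0) * (10 * x * real U) \<le> x * real K ^ card J * (2 * real U)" .
    then have "real (card B0) * (10 * x * real U) \<le> (real K ^ card J / 5) * (10 * x * real U)"
      by (simp add: algebra_simps)
    then show ?thesis using th mult_right_le_imp_le by blast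
  qed
  define Bi where "Bi = (\<lambda>i. {c\<in>S. 10 * real r * (x * real t) < (\<Sum>j\<in>J. h (T i) j (c j))})"
  have n3: "exp (3 * (x * real t)) \<ge> real n ^ 3"
  proof -
    have "real n ^ 3 = (2::real) powr (3 * log 2 (real n))"
    proof -
      have "(2::real) powr (3 * log 2 (real n)) = (2 powr (log 2 (real n))) powr 3"
        by (simp add: powr_powr mult.commute)
      also have "\<dots> = real n powr 3" using n2 by simp
      also have "\<dots> = real n ^ 3" using n2 by (simp add: powr_realpow)
      finally show ?thesis by simp
    qed
    also have "\<dots> \<le> 2 powr (3 * (x * real t))" using xtl by simp
    also have "\<dots> \<le> exp (3 * (x * real t))"
    proof -
      have "3 * (x * real t) * ln 2 \<le> 3 * (x * real t)" using xpos tpos ln_2_less_1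
        by (simp add: mult_left_le)
      then show ?thesis by (simp add: powr_def mult.commute)
    qed
    finally show ?thesis .
  qed
  have Bi: "\<And>i. i \<in> {1..n} \<Longrightarrow> real (card (Bi i)) \<le> real K ^ card J / real n ^ 3"
  proof -
    fix i assume i: "i \<in> {1..n}"
    have hle: "\<And>j a. j \<in> J \<Longrightarrow> h (T i) j a \<le> 2 * real r"
    proof -
      fix j a assume j: "j \<in> J"
      have "card (V j \<inter> T i) \<le> r" "card (V (j+1) \<inter> T i) \<le> r"
        using Tr[OF i] Jsub[OF j] by (simp_all add: Int_commute)
      then show "h (T i) j a \<le> 2 * real r" using h_le[OF j, of "T i" a] by linarith
    qed
    show "real (card (Bi i)) \<le> real K ^ card J / real n ^ 3"
    proof (cases "r = 0")
      case True
      have "Bi i = {}"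
      proof -
        have "(\<Sum>j\<in>J. h (T i) j (c j)) \<le> 0" for c
          using sum_mono[of J "\<lambda>j. h (T i) j (c j)" "\<lambda>_. 0"] hle True by simp
        then show ?thesis unfolding Bi_def using True by (auto simp: not_less)
      qed
      then show ?thesis by simp
    next
      case False
      define \<rho> where "\<rho> = 2 * real r"
      have rho: "\<rho> > 0" unfolding \<rho>_def using False by simp
      define F where "F = (\<lambda>c. \<Prod>j\<in>J. exp (h (T i) j (c j) / \<rho>))"
      have Fexp: "F c = exp ((\<Sum>j\<in>J. h (T i) j (c j)) / \<rho>)" for c
        unfolding F_def by (simp add: exp_sum sum_divide_distrib finJ)
      have sub: "Bi i \<subseteq> {c\<in>S. exp (5 * (x * real t)) < F c}"
      proof
        fix c assume c: "c \<in> Bi i"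
        then have "10 * real r * (x * real t) < (\<Sum>j\<in>J. h (T i) j (c j))" unfolding Bi_def by simp
        then have "5 * (x * real t) < (\<Sum>j\<in>J. h (T i) j (c j)) / \<rho>"
          using rho unfolding \<rho>_def by (simp add: field_simps)
        then show "c \<in> {c\<in>S. exp (5 * (x * real t)) < F c}" using c unfolding Fexp Bi_def by simp
      qed
      have "real (card (Bi i)) * exp (5 * (x * real t)) \<le> real (card {c\<in>S. exp (5 * (x * real t)) < F c}) * exp (5 * (x * real t))"
        using card_mono[OF _ sub] finS by simp
      also have "\<dots> \<le> (\<Sum>c\<in>S. F c)"
        by (rule markov_count[OF finS]) (simp add: F_def prod_nonneg)
      also have "\<dots> = (\<Prod>j\<in>J. \<Sum>a\<in>{0..<K}. exp (h (T i) j a / \<rho>))"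
        unfolding F_def S_def by (rule prod_sum_PiE[symmetric]) (use finJ in auto)
      also have "\<dots> \<le> (\<Prod>j\<in>J. real K * exp (2 * x))"
      proof (rule prod_mono)
        fix j assume j: "j \<in> J"
        have "(\<Sum>a\<in>{0..<K}. exp (h (T i) j a / \<rho>)) \<le> (\<Sum>a\<in>{0..<K}. 1 + 2 * (h (T i) j a / \<rho>))"
        proof (rule sum_mono)
          fix a
          have "h (T i) j a / \<rho> \<le> 1" using hle[OF j, of a] rho unfolding \<rho>_def by simp
          moreover have "0 \<le> h (T i) j a / \<rho>" using h_nonneg rho by simp
          ultimately show "exp (h (T i) j a / \<rho>) \<le> 1 + 2 * (h (T i) j a / \<rho>)" by (rule exp_le_1_2[rotated])
        qed
        also have "\<dots> = real K + 2 / \<rho> * (\<Sum>a\<in>{0..<K}. h (T i) j a)"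
          by (simp add: sum.distrib sum_distrib_left)
        also have "\<dots> \<le> real K + 2 / \<rho> * (x * real K * \<rho>)"
        proof -
          have "(\<Sum>a\<in>{0..<K}. h (T i) j a) \<le> x * real K * (real (card (V j \<inter> T i)) + real (card (V (j+1) \<inter> T i)))"
            by (rule h_avg[OF j])
          also have "\<dots> \<le> x * real K * \<rho>"
          proof -
            have "card (V j \<inter> T i) \<le> r" "card (V (j+1) \<inter> T i) \<le> r"
              using Tr[OF i] Jsub[OF j] by (simp_all add: Int_commute)
            then have "real (card (V j \<inter> T i)) + real (card (V (j+1) \<inter> T i)) \<le> \<rho>"
              unfolding \<rho>_def by linarith
            then show ?thesis using xpos by (intro mult_left_mono) auto
          qed
          finally show ?thesis using rho by (intro add_left_mono mult_left_mono) auto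
        qed
        also have "\<dots> = real K * (1 + 2 * x)" using rho by (simp add: field_simps)
        also have "\<dots> \<le> real K * exp (2 * x)"
          using exp_ge_add_one_self[of "2 * x"] by (intro mult_left_mono) auto
        finally show "0 \<le> (\<Sum>a\<in>{0..<K}. exp (h (T i) j a / \<rho>)) \<and>
            (\<Sum>a\<in>{0..<K}. exp (h (T i) j a / \<rho>)) \<le> real K * exp (2 * x)"
          by (simp add: sum_nonneg)
      qed
      also have "\<dots> = real K ^ card J * exp (2 * x * real (card J))"
        by (simp add: power_mult_distrib exp_of_nat_mult[symmetric] mult.commute)
      also have "\<dots> \<le> real K ^ card J * exp (2 * (x * real t))"
      proof -
        have "real (card J) \<le> real t" using cardJ by simp
        then have "2 * x * real (card J) \<le> 2 * (x * real t)" using xpos by simp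
        then show ?thesis by (intro mult_left_mono) auto
      qed
      finally have "real (card (Bi i)) * exp (5 * (x * real t)) \<le> real K ^ card J * exp (2 * (x * real t))" .
      then have "real (card (Bi i)) * exp (3 * (x * real t)) \<le> real K ^ card J"
      proof -
        assume a: "real (card (Bi i)) * exp (5 * (x * real t)) \<le> real K ^ card J * exp (2 * (x * real t))"
        have "exp (5 * (x * real t)) = exp (3 * (x * real t)) * exp (2 * (x * real t))"
          by (simp add: exp_add[symmetric])
        then have "(real (card (Bi i)) * exp (3 * (x * real t))) * exp (2 * (x * real t)) \<le> real K ^ card J * exp (2 * (x * real t))"
          using a by (simp add: mult.assoc)
        then show ?thesis by simp
      qed
      then have "real (card (Bi i)) * real n ^ 3 \<le> real K ^ card J"
        using n3 by (meson mult_left_mono of_nat_0_le_iff order_trans)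
      then show ?thesis using n2 by (simp add: pos_le_divide_eq)
    qed
  qed
  have KJpos: "real K ^ card J > 0" using K1 by simp
  have total: "real (card (B0 \<union> (\<Union>i\<in>{1..n}. Bi i))) < real (card S)"
  proof -
    have "card (B0 \<union> (\<Union>i\<in>{1..n}. Bi i)) \<le> card B0 + card (\<Union>i\<in>{1..n}. Bi i)" by (rule card_Un_le)
    also have "\<dots> \<le> card B0 + (\<Sum>i\<in>{1..n}. card (Bi i))" using card_UN_le[of "{1..n}" Bi] by simp
    finally have "real (card (B0 \<union> (\<Union>i\<in>{1..n}. Bi i))) \<le> real (card B0) + (\<Sum>i\<in>{1..n}. real (card (Bi i)))"
      by (metis of_nat_add of_nat_le_iff of_nat_sum)
    also have "\<dots> \<le> real K ^ card J / 5 + (\<Sum>i\<in>{1..n}. real K ^ card J / real n ^ 3)"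
      by (intro add_mono B0 sum_mono Bi)
    also have "\<dots> = real K ^ card J / 5 + real K ^ card J / real n ^ 2"
    proof -
      have "(\<Sum>i\<in>{1..n}. real K ^ card J / real n ^ 3) = real n * (real K ^ card J / real n ^ 3)" by simp
      also have "\<dots> = real K ^ card J / real n ^ 2" using n2 by (simp add: power_eq_if field_simps)
      finally show ?thesis by simp
    qed
    also have "\<dots> \<le> real K ^ card J / 5 + real K ^ card J / 4"
    proof -
      have "(4::real) \<le> real n ^ 2" using n2 power_mono[of 2 "real n" 2] by simp
      then show ?thesis using KJpos n2 by (intro add_left_mono divide_left_mono) auto
    qed
    also have "\<dots> < real K ^ card J" using KJpos by simp
    also have "\<dots> = real (card S)" unfolding cardS by simp
    finally show ?thesis .
  qed
  obtain c where c: "c \<in> S" "c \<notin> B0" "\<And>i. i \<in> {1..n} \<Longrightarrow> c \<notin> Bi i"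
  proof -
    have "\<not> S \<subseteq> B0 \<union> (\<Union>i\<in>{1..n}. Bi i)"
    proof
      assume "S \<subseteq> B0 \<union> (\<Union>i\<in>{1..n}. Bi i)"
      then have "card S \<le> card (B0 \<union> (\<Union>i\<in>{1..n}. Bi i))"
        by (rule card_mono[rotated]) (use finS in \<open>auto simp: B0_def Bi_def\<close>)
      then show False using total by simp
    qed
    then show ?thesis using that by blast
  qed
  define M where "M = (\<lambda>j. Mat j (c j))"
  have m1: "\<forall>j\<in>{1..t-1}. bip_matching E (V j) (V (j+1)) (M j)"
    using matching unfolding M_def J_def by blast
  have y1: "real (card (Yf M)) \<le> 10 * real U * real t powr (-1/2) * log 2 (real n)"
  proof -
    have "real (card (Yf M)) \<le> (\<Sum>j\<in>J. h UNIV j (c j))" using Ycard[of c UNIV] unfolding M_def by simp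
    also have "\<dots> \<le> 10 * x * real U" using c(1,2) unfolding B0_def by simp
    finally show ?thesis unfolding x_def by (simp add: algebra_simps)
  qed
  have y2: "\<forall>i\<in>{1..n}. real (card (Yf M \<inter> T i)) \<le> 10 * real r * sqrt (real t) * log 2 (real n)"
  proof
    fix i assume i: "i \<in> {1..n}"
    have "real (card (Yf M \<inter> T i)) \<le> (\<Sum>j\<in>J. h (T i) j (c j))" using Ycard[of c "T i"] unfolding M_def by simp
    also have "\<dots> \<le> 10 * real r * (x * real t)" using c(1) c(3)[OF i] unfolding Bi_def by simp
    finally show "real (card (Yf M \<inter> T i)) \<le> 10 * real r * sqrt (real t) * log 2 (real n)"
      unfolding xt by (simp add: algebra_simps)
  qed
  show ?thesis
  proof (intro exI[of _ M] conjI)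
    show "\<forall>j\<in>{1..t-1}. bip_matching E (V j) (V (j+1)) (M j)" by (rule m1)
    show "let Y = {y \<in> V 1 \<union> V t. y \<notin> match_verts (M 1) \<and> y \<notin> match_verts (M (t-1))}
                  \<union> {y. \<exists>j \<in> {2..t-1}. y \<in> V j \<and>
                        \<not> (y \<in> match_verts (M (j-1)) \<and> y \<in> match_verts (M j))}
            in real (card Y) \<le> 10 * real (card (\<Union>i\<in>{1..t}. V i)) * real t powr (-1/2) * log 2 (real n)
               \<and> (\<forall>i \<in> {1..n}. real (card (Y \<inter> T i)) \<le> 10 * real r * sqrt (real t) * log 2 (real n))"
      unfolding Let_def using y1 y2 unfolding Yf_def U_def by blast
  qed
qed

end
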